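(* Let $P,Q$ be convex polygons in the plane, with all vertices in general position, that form a weakly disjoint pair. Then their boundaries $\partial P$ and $\partial Q$ intersect in at most two points.
   Context: Two convex polygons $P,Q$ form a weakly disjoint pair if $P\setminus Q$ and $Q\setminus P$ are both connected sets and $P$ and $Q$ share no vertex. The convex hull of a line segment is regarded as a valid degenerate convex polygon with two edges. *)

theory Defs
  imports "HOL-Analysis.Analysis"
begin

type_synonym point = "real^2"

definition vertices :: "point set \<Rightarrow> point set" where
  "vertices P = {v. v extreme_point_of P}"

text \<open>A convex polygon: the convex hull of finitely many points, with at least two
  vertices (a segment is allowed as a degenerate polygon).\<close>
definition convex_polygon :: "point set \<Rightarrow> bool" where
  "convex_polygon P \<longleftrightarrow> (\<exists>S. finite S \<and> P = convex hull S) \<and> card (vertices P) \<ge> 2"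

definition weakly_disjoint :: "point set \<Rightarrow> point set \<Rightarrow> bool" where
  "weakly_disjoint P Q \<longleftrightarrow> connected (P - Q) \<and> connected (Q - P) \<and>
     vertices P \<inter> vertices Q = {}"

definition general_position :: "point set \<Rightarrow> bool" where
  "general_position V \<longleftrightarrow> (\<forall>a\<in>V. \<forall>b\<in>V. \<forall>c\<in>V.
      a \<noteq> b \<and> a \<noteq> c \<and> b \<noteq> c \<longrightarrow> \<not> collinear {a, b, c})"

end

theory Submission imports Defs begin

definition side :: "point \<Rightarrow> point \<Rightarrow> point \<Rightarrow> real" where
  "side a b w = (b$1 - a$1)*(w$2 - a$2) - (b$2 - a$2)*(w$1 - a$1)"

lemma side_cyc: "side b c a = side a b c"
  unfolding side_def by (simp add: algebra_simps)

lemma side_sum: "side y z w + side z x w + side x y w = side x y z"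
  unfolding side_def by (simp add: algebra_simps)

lemma side_bary: "side y z w *\<^sub>R x + side z x w *\<^sub>R y + side x y w *\<^sub>R z = side x y z *\<^sub>R w"
proof (subst vec_eq_iff, rule allI)
  fix i :: 2
  have 1: "(side y z w *\<^sub>R x + side z x w *\<^sub>R y + side x y w *\<^sub>R z)$1 = (side x y z *\<^sub>R w)$1"
    by (simp add: side_def algebra_simps)
  have 2: "(side y z w *\<^sub>R x + side z x w *\<^sub>R y + side x y w *\<^sub>R z)$2 = (side x y z *\<^sub>R w)$2"
    by (simp add: side_def algebra_simps)
  show "(side y z w *\<^sub>R x + side z x w *\<^sub>R y + side x y w *\<^sub>R z)$i = (side x y z *\<^sub>R w)$i"
    using exhaust_2[of i] 1 2 by auto
qed

lemma side_comb: "u + v = 1 \<Longrightarrow> side a b (u *\<^sub>R p + v *\<^sub>R q) = u * side a b p + v * side a b q"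
proof -
  assume "u + v = 1" then have v: "v = 1 - u" by simp
  show ?thesis unfolding side_def v by (simp add: algebra_simps)
qed

lemma eq2:
  fixes x y :: point
  assumes "x$1 = y$1" "x$2 = y$2" shows "x = y"
proof (subst vec_eq_iff, rule allI)
  fix i :: 2
  from exhaust_2[of i] show "x$i = y$i" using assms by auto
qed

lemma side_line:
  assumes "a \<noteq> b" "side a b w = 0"
  shows "\<exists>t. w = a + t *\<^sub>R (b - a)"
proof (cases "b$1 = a$1")
  case True
  then have d: "b$2 - a$2 \<noteq> 0" using assms(1) eq2[of b a] by auto
  have "(b$2 - a$2) * (w$1 - a$1) = 0" using assms(2) True by (simp add: side_def)
  then have w1: "w$1 = a$1" using d by simp
  define t where "t = (w$2 - a$2)/(b$2 - a$2)"
  have w2: "w$2 = a$2 + t * (b$2 - a$2)" using d by (simp add: t_def)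
  have "w = a + t *\<^sub>R (b - a)" using w1 w2 True by (intro eq2) simp_all
  then show ?thesis by blast
next
  case False
  then have d: "b$1 - a$1 \<noteq> 0" by simp
  define t where "t = (w$1 - a$1)/(b$1 - a$1)"
  have "(b$1 - a$1) * (w$2 - a$2) = (b$2 - a$2) * (w$1 - a$1)" using assms(2) by (simp add: side_def)
  then have "(b$1 - a$1) * (w$2 - a$2) = (b$1 - a$1) * (t * (b$2 - a$2))"
    using d by (simp add: t_def)
  then have w2: "w$2 = a$2 + t * (b$2 - a$2)" using d by simp
  have w1: "w$1 = a$1 + t * (b$1 - a$1)" using d by (simp add: t_def)
  have "w = a + t *\<^sub>R (b - a)" using w1 w2 by (intro eq2) simp_all
  then show ?thesis by blast
qed

lemma side_collinear:
  assumes "a \<noteq> b" "\<And>w. w \<in> S \<Longrightarrow> side a b w = 0"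
  shows "collinear S"
proof -
  have "\<forall>w\<in>S. \<exists>t. w = a + t *\<^sub>R (b - a)" using side_line assms by blast
  then obtain t where t: "\<And>w. w \<in> S \<Longrightarrow> w = a + t w *\<^sub>R (b - a)" by metis
  show ?thesis unfolding collinear_def
  proof (intro exI[of _ "b - a"] ballI)
    fix p q assume "p \<in> S" "q \<in> S"
    then have "p - q = (t p - t q) *\<^sub>R (b - a)"
    proof -
      have "p - q = (a + t p *\<^sub>R (b - a)) - (a + t q *\<^sub>R (b - a))" using t[of p] t[of q] \<open>p \<in> S\<close> \<open>q \<in> S\<close> by simp
      also have "\<dots> = (t p - t q) *\<^sub>R (b - a)" by (simp add: algebra_simps)
      finally show ?thesis .
    qed
    then show "\<exists>c. p - q = c *\<^sub>R (b - a)" by blast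
  qed
qed

lemma collinear_side:
  assumes "collinear {a, b, w}"
  shows "side a b w = 0"
proof -
  obtain u where u: "\<forall>p\<in>{a,b,w}. \<forall>q\<in>{a,b,w}. \<exists>c. p - q = c *\<^sub>R u"
    using assms unfolding collinear_def by blast
  then obtain c1 c2 where "b - a = c1 *\<^sub>R u" "w - a = c2 *\<^sub>R u" by blast
  then have "b = a + c1 *\<^sub>R u" "w = a + c2 *\<^sub>R u" by (simp_all add: algebra_simps)
  then show ?thesis unfolding side_def by (simp add: algebra_simps)
qed


lemma side_cont: "continuous_on UNIV (side a b)"
  unfolding side_def[abs_def] by (intro continuous_intros)

lemma side_triv[simp]: "side a b a = 0" "side a b b = 0"
  unfolding side_def by simp_all

lemma noncol_D:
  assumes "\<not> collinear {a, b, c}" shows "side a b c \<noteq> 0" "a \<noteq> b" "a \<noteq> c" "b \<noteq> c"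
proof -
  show ab: "a \<noteq> b" using assms collinear_2 by (metis insert_absorb2)
  show "a \<noteq> c"
  proof
    assume "a = c" then have "{a,b,c} = {a,b}" by auto
    then show False using assms collinear_2 by metis
  qed
  show "b \<noteq> c"
  proof
    assume "b = c" then have "{a,b,c} = {a,b}" by auto
    then show False using assms collinear_2 by metis
  qed
  show "side a b c \<noteq> 0"
  proof
    assume "side a b c = 0"
    then have "collinear {a,b,c}" using ab by (intro side_collinear[of a b]) auto
    then show False using assms by simp
  qed
qed

lemma normal_side:
  fixes n u v :: point
  assumes "n \<noteq> 0" "u \<noteq> v" "n \<bullet> u = n \<bullet> v"
  shows "\<exists>l. l \<noteq> 0 \<and> (\<forall>p. n \<bullet> p - n \<bullet> u = l * side u v p)"
proof -
  have inn: "\<And>x y :: point. x \<bullet> y = x$1 * y$1 + x$2 * y$2"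
    by (simp add: inner_vec_def sum_2)
  have e: "n$1 * (v$1 - u$1) + n$2 * (v$2 - u$2) = 0" using assms(3) unfolding inn by (simp add: algebra_simps)
  have nz: "n$1 \<noteq> 0 \<or> n$2 \<noteq> 0" using assms(1) eq2[of n 0] by auto
  show ?thesis
  proof (cases "v$1 = u$1")
    case True
    then have d: "v$2 - u$2 \<noteq> 0" using assms(2) eq2[of v u] by auto
    then have n2: "n$2 = 0" using e True by simp
    then have n1: "n$1 \<noteq> 0" using nz by simp
    show ?thesis
    proof (intro exI[of _ "- n$1 / (v$2 - u$2)"] conjI allI)
      show "- n$1 / (v$2 - u$2) \<noteq> 0" using n1 d by simp
      fix p
      show "n \<bullet> p - n \<bullet> u = - n$1 / (v$2 - u$2) * side u v p"
        unfolding inn side_def using True n2 d by (simp add: field_simps)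
    qed
  next
    case False
    then have d: "v$1 - u$1 \<noteq> 0" by simp
    have n1: "n$1 = - n$2 * (v$2 - u$2) / (v$1 - u$1)" using e d by (simp add: field_simps)
    have n2: "n$2 \<noteq> 0" using nz n1 by auto
    show ?thesis
    proof (intro exI[of _ "n$2 / (v$1 - u$1)"] conjI allI)
      show "n$2 / (v$1 - u$1) \<noteq> 0" using n2 d by simp
      fix p
      show "n \<bullet> p - n \<bullet> u = n$2 / (v$1 - u$1) * side u v p"
      proof -
        have n1d: "n$1 * (v$1 - u$1) = - n$2 * (v$2 - u$2)" using e by (simp add: algebra_simps)
        have "(n \<bullet> p - n \<bullet> u) * (v$1 - u$1) = (n$1 * (v$1 - u$1)) * (p$1 - u$1) + n$2 * (p$2 - u$2) * (v$1 - u$1)"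
          unfolding inn by (simp add: algebra_simps)
        also have "\<dots> = (- n$2 * (v$2 - u$2)) * (p$1 - u$1) + n$2 * (p$2 - u$2) * (v$1 - u$1)"
          by (simp only: n1d)
        also have "\<dots> = n$2 * side u v p" unfolding side_def by (simp add: algebra_simps)
        finally have "(n \<bullet> p - n \<bullet> u) * (v$1 - u$1) = n$2 * side u v p" .
        then show ?thesis using d by (simp add: field_simps)
      qed
    qed
  qed
qed

lemma support:
  fixes P :: "point set" and y :: point
  assumes "convex P" "closed P" "y \<in> frontier P"
  shows "\<exists>n. n \<noteq> 0 \<and> (\<forall>p\<in>P. n \<bullet> p \<le> n \<bullet> y)"
proof (cases "interior P = {}")
  case True
  obtain a b where ab: "a \<noteq> 0" "P \<subseteq> {x. a \<bullet> x = b}"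
    by (rule empty_interior_subset_hyperplane[OF assms(1) True])
  have "y \<in> P" using assms frontier_subset_closed by blast
  then have "\<forall>p\<in>P. a \<bullet> p = a \<bullet> y" using ab(2) by blast
  then show ?thesis using ab(1) by (intro exI[of _ a]) simp
next
  case False
  have yP: "y \<in> P" using assms frontier_subset_closed by blast
  have "y \<notin> interior P" using assms(3) by (simp add: frontier_def)
  then have "y \<notin> rel_interior P" using False rel_interior_nonempty_interior by blast
  then have "\<exists>a. a \<noteq> 0 \<and> (\<forall>z\<in>P. a \<bullet> y \<le> a \<bullet> z)"
    apply (rule supporting_hyperplane_rel_boundary[OF assms(1) yP])
    by blast
  then obtain a where "a \<noteq> 0" "\<forall>z\<in>P. a \<bullet> y \<le> a \<bullet> z" by blast
  then show ?thesis by (intro exI[of _ "-a"]) auto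
qed

lemma weights3:
  fixes fw fa fb fc al be ga :: real
  assumes "fw = al * fa + be * fb + ga * fc" "al < 0" "ga < 0" "al + be + ga = 1"
    "fw \<le> fb" "fa \<le> fb" "fc \<le> fb"
  shows "fa = fb \<and> fc = fb"
proof -
  have "fw - fb = al * (fa - fb) + ga * (fc - fb)"
  proof -
    have "be = 1 - al - ga" using assms(4) by simp
    then have "fw = al*fa + (1-al-ga)*fb + ga*fc" using assms(1) by simp
    then show ?thesis by (simp add: algebra_simps)
  qed
  moreover have "al * (fa - fb) \<ge> 0" using assms by (simp add: mult_nonpos_nonpos)
  moreover have "ga * (fc - fb) \<ge> 0" using assms by (simp add: mult_nonpos_nonpos)
  ultimately have "al * (fa - fb) = 0" "ga * (fc - fb) = 0" using assms(5) by linarith+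
  then show ?thesis using assms by auto
qed


lemma neg_div: "(x::real) * D < 0 \<Longrightarrow> x / D < 0"
  by (auto simp: divide_less_0_iff mult_less_0_iff)

lemma nonneg_div: "\<not> (x::real) * D < 0 \<Longrightarrow> D \<noteq> 0 \<Longrightarrow> 0 \<le> x / D"
  by (auto simp: zero_le_divide_iff mult_less_0_iff)

lemma bary:
  assumes "side a b c \<noteq> 0"
  shows "(side b c w / side a b c) *\<^sub>R a + (side c a w / side a b c) *\<^sub>R b + (side a b w / side a b c) *\<^sub>R c = w"
    "side b c w / side a b c + side c a w / side a b c + side a b w / side a b c = 1"
proof -
  let ?D = "side a b c"
  have "(side b c w / ?D) *\<^sub>R a + (side c a w / ?D) *\<^sub>R b + (side a b w / ?D) *\<^sub>R c
      = (1 / ?D) *\<^sub>R (side b c w *\<^sub>R a + side c a w *\<^sub>R b + side a b w *\<^sub>R c)"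
    by (simp add: scaleR_add_right)
  also have "\<dots> = (1 / ?D) *\<^sub>R (?D *\<^sub>R w)" by (simp only: side_bary)
  also have "\<dots> = w" using assms by simp
  finally show "(side b c w / ?D) *\<^sub>R a + (side c a w / ?D) *\<^sub>R b + (side a b w / ?D) *\<^sub>R c = w" .
  have "side b c w / ?D + side c a w / ?D + side a b w / ?D = (side b c w + side c a w + side a b w) / ?D"
    by (simp add: add_divide_distrib)
  also have "\<dots> = 1" using assms by (simp add: side_sum)
  finally show "side b c w / ?D + side c a w / ?D + side a b w / ?D = 1" .
qed

lemma corner:
  fixes P :: "point set"
  assumes "convex P" "closed P" "a \<in> P" "c \<in> P" "w \<in> P" "b \<in> frontier P"
    "\<not> collinear {a, b, c}"
    "side a b w * side a b c < 0" "side b c w * side b c a < 0"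
  shows False
proof -
  let ?D = "side a b c"
  have D: "?D \<noteq> 0" and ac: "a \<noteq> c" using noncol_D[OF assms(7)] by auto
  define al where "al = side b c w / ?D"
  define be where "be = side c a w / ?D"
  define ga where "ga = side a b w / ?D"
  have al: "al < 0" unfolding al_def using assms(9) by (intro neg_div) (simp add: side_cyc)
  have ga: "ga < 0" unfolding ga_def using assms(8) by (intro neg_div)
  have sum: "al + be + ga = 1" unfolding al_def be_def ga_def using bary(2)[OF D] .
  have w: "al *\<^sub>R a + be *\<^sub>R b + ga *\<^sub>R c = w" unfolding al_def be_def ga_def using bary(1)[OF D] .
  obtain n where n: "n \<noteq> 0" "\<And>p. p \<in> P \<Longrightarrow> n \<bullet> p \<le> n \<bullet> b"
    using support[OF assms(1,2,6)] by blast
  have "n \<bullet> w = al * (n \<bullet> a) + be * (n \<bullet> b) + ga * (n \<bullet> c)"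
    by (simp flip: w add: inner_add_right)
  then have eq: "n \<bullet> a = n \<bullet> b \<and> n \<bullet> c = n \<bullet> b"
    using weights3[OF _ al ga sum] n(2) assms(3,4,5) by blast
  then obtain l where l: "l \<noteq> 0" "\<And>p. n \<bullet> p - n \<bullet> a = l * side a c p"
    using normal_side[OF n(1) ac] by auto
  have "l * side a c b = 0" using l(2)[of b] eq by simp
  then have "side a c b = 0" using l(1) by simp
  then have "collinear {a, c, b}" using ac by (intro side_collinear[of a c]) auto
  then show False using assms(7) by (simp add: insert_commute)
qed

lemma cover:
  fixes Q :: "point set"
  assumes "convex Q" "a \<in> Q" "b \<in> Q" "c \<in> Q" "side a b c \<noteq> 0"
    "\<not> side a b w * side a b c < 0" "\<not> side b c w * side b c a < 0" "\<not> side c a w * side c a b < 0"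
  shows "w \<in> Q"
proof -
  let ?D = "side a b c"
  have "convex hull {a,b,c} \<subseteq> Q" using assms by (intro hull_minimal) auto
  moreover have "w \<in> convex hull {a,b,c}"
    unfolding convex_hull_3
  proof (intro CollectI exI conjI)
    show "w = (side b c w / ?D) *\<^sub>R a + (side c a w / ?D) *\<^sub>R b + (side a b w / ?D) *\<^sub>R c"
      using bary(1)[OF assms(5)] by simp
    show "side b c w / ?D + side c a w / ?D + side a b w / ?D = 1" using bary(2)[OF assms(5)] .
    show "0 \<le> side b c w / ?D" using assms(7,5) by (intro nonneg_div) (auto simp: side_cyc)
    show "0 \<le> side c a w / ?D" using assms(8,5) side_cyc[of c a b] side_cyc[of b c a]
      by (intro nonneg_div) auto
    show "0 \<le> side a b w / ?D" using assms(6,5) by (intro nonneg_div) auto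
  qed
  ultimately show ?thesis by blast
qed

lemma local_extreme:
  fixes P Q :: "point set"
  assumes "open U" "P \<inter> U = Q \<inter> U" "convex Q" "v \<in> U" "v extreme_point_of P"
  shows "v extreme_point_of Q"
proof -
  have vP: "v \<in> P" using assms(5) by (simp add: extreme_point_of_def)
  then have vQ: "v \<in> Q" using assms(2,4) by blast
  obtain e where e: "e > 0" "ball v e \<subseteq> U" using assms(1,4) open_contains_ball by blast
  show ?thesis unfolding extreme_point_of_def
  proof (intro conjI vQ ballI notI)
    fix a b assume a: "a \<in> Q" and b: "b \<in> Q" and vs: "v \<in> open_segment a b"
    then obtain u where u: "a \<noteq> b" "0 < u" "u < 1" "v = (1 - u) *\<^sub>R a + u *\<^sub>R b"
      by (auto simp: in_segment)
    define N where "N = norm (a - v) + norm (b - v)"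
    have N: "N > 0" unfolding N_def using u(1)
      by (metis add_pos_nonneg eq_iff_diff_eq_0 norm_ge_zero norm_not_less_zero order_le_less
          add_nonneg_pos zero_less_norm_iff)
    define d where "d = min 1 (e / (2 * N))"
    have d: "0 < d" "d \<le> 1" "d * N \<le> e / 2" using e N unfolding d_def
      by (auto simp: min_def field_simps)
    define a' where "a' = (1 - d) *\<^sub>R v + d *\<^sub>R a"
    define b' where "b' = (1 - d) *\<^sub>R v + d *\<^sub>R b"
    have a'Q: "a' \<in> Q" unfolding a'_def using assms(3) vQ a d by (intro convexD) auto
    have b'Q: "b' \<in> Q" unfolding b'_def using assms(3) vQ b d by (intro convexD) auto
    have "dist v a' = d * norm (a - v)"
      unfolding a'_def dist_norm using d by (simp add: algebra_simps norm_minus_commute flip: scaleR_diff_right)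
    also have "\<dots> \<le> d * N" using d unfolding N_def by (intro mult_left_mono) auto
    finally have "a' \<in> ball v e" using d e by simp
    then have a'P: "a' \<in> P" using a'Q assms(2) e(2) by blast
    have "dist v b' = d * norm (b - v)"
      unfolding b'_def dist_norm using d by (simp add: algebra_simps norm_minus_commute flip: scaleR_diff_right)
    also have "\<dots> \<le> d * N" using d unfolding N_def by (intro mult_left_mono) auto
    finally have "b' \<in> ball v e" using d e by simp
    then have b'P: "b' \<in> P" using b'Q assms(2) e(2) by blast
    have ne: "a' \<noteq> b'"
    proof
      assume "a' = b'"
      then have "d *\<^sub>R a = d *\<^sub>R b" unfolding a'_def b'_def by simp
      then show False using d u(1) by simp
    qed
    have "(1 - u) *\<^sub>R a' + u *\<^sub>R b' = v + d *\<^sub>R ((1 - u) *\<^sub>R a + u *\<^sub>R b - v)"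
      unfolding a'_def b'_def by (simp add: algebra_simps)
    also have "\<dots> = v" using u(4) by simp
    finally have "v \<in> open_segment a' b'" using ne u(2,3) unfolding in_segment by metis
    then show False using assms(5) a'P b'P by (auto simp: extreme_point_of_def)
  qed
qed

lemma face_vertices:
  fixes P :: "point set"
  assumes "compact P" "convex P" "s \<noteq> 0" "a \<noteq> b" "a \<in> P" "b \<in> P"
    "\<And>w. w \<in> P \<Longrightarrow> s * side a b w \<ge> 0"
  shows "\<exists>p1 p2. p1 \<noteq> p2 \<and> p1 \<in> vertices P \<and> p2 \<in> vertices P \<and> side a b p1 = 0 \<and> side a b p2 = 0"
proof -
  define F where "F = P \<inter> {w. side a b w = 0}"
  have "closed {w. side a b w = 0}" using side_cont by (intro closed_Collect_eq) auto
  then have cF: "compact F" unfolding F_def using assms(1) by (simp add: compact_Int_closed)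
  have "convex {w. side a b w = 0}"
    unfolding convex_def by (auto simp: side_comb)
  then have vF: "convex F" unfolding F_def using assms(2) by (simp add: convex_Int)
  have KM: "F = convex hull {x. x extreme_point_of F}" using Krein_Milman_Minkowski[OF cF vF] .
  have abF: "a \<in> F" "b \<in> F" unfolding F_def using assms(5,6) by auto
  have ext: "x extreme_point_of P" if "x extreme_point_of F" for x
  proof -
    have xF: "x \<in> F" using that by (simp add: extreme_point_of_def)
    show ?thesis unfolding extreme_point_of_def
    proof (intro conjI ballI notI)
      show "x \<in> P" using xF F_def by simp
      fix p q assume p: "p \<in> P" and q: "q \<in> P" and xs: "x \<in> open_segment p q"
      then obtain u where u: "p \<noteq> q" "0 < u" "u < 1" "x = (1 - u) *\<^sub>R p + u *\<^sub>R q"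
        by (auto simp: in_segment)
      have "0 = side a b x" using xF F_def by simp
      also have "\<dots> = (1 - u) * side a b p + u * side a b q" using u(4) side_comb[of "1-u" u] by simp
      finally have "(1 - u) * (s * side a b p) + u * (s * side a b q) = 0"
        by (simp add: algebra_simps)
      moreover have "(1 - u) * (s * side a b p) \<ge> 0" "u * (s * side a b q) \<ge> 0"
        using assms(7) p q u by auto
      ultimately have "(1 - u) * (s * side a b p) = 0" "u * (s * side a b q) = 0" by linarith+
      then have "side a b p = 0" "side a b q = 0" using u assms(3) by auto
      then have "p \<in> F" "q \<in> F" using p q F_def by auto
      then show False using that xs by (auto simp: extreme_point_of_def)
    qed
  qed
  have "\<exists>p1 p2. p1 \<noteq> p2 \<and> p1 extreme_point_of F \<and> p2 extreme_point_of F"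
  proof (rule ccontr)
    assume "\<not> ?thesis"
    then have "\<exists>p. {x. x extreme_point_of F} \<subseteq> {p}" by blast
    then obtain p where "{x. x extreme_point_of F} \<subseteq> {p}" by blast
    then have "convex hull {x. x extreme_point_of F} \<subseteq> {p}" by (intro hull_minimal) auto
    then have "F \<subseteq> {p}" using KM by simp
    then show False using abF assms(4) by blast
  qed
  then obtain p1 p2 where "p1 \<noteq> p2" "p1 extreme_point_of F" "p2 extreme_point_of F" by blast
  moreover have "p1 \<in> F" "p2 \<in> F" using calculation by (auto simp: extreme_point_of_def)
  ultimately show ?thesis using ext unfolding vertices_def F_def by blast
qed

lemma final:
  assumes "a \<noteq> b" "p1 \<noteq> p2" "p1 \<in> vertices P" "p2 \<in> vertices P" "q \<in> vertices Q"
    "side a b p1 = 0" "side a b p2 = 0" "side a b q = 0"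
    "vertices P \<inter> vertices Q = {}" "general_position (vertices P \<union> vertices Q)"
  shows False
proof -
  have "q \<noteq> p1" "q \<noteq> p2" using assms(3,4,5,9) by auto
  moreover have "collinear {p1, p2, q}" using assms(1,6,7,8) by (intro side_collinear[of a b]) auto
  moreover have gp: "\<And>a b c. a \<in> vertices P \<union> vertices Q \<Longrightarrow> b \<in> vertices P \<union> vertices Q
      \<Longrightarrow> c \<in> vertices P \<union> vertices Q \<Longrightarrow> a \<noteq> b \<Longrightarrow> a \<noteq> c \<Longrightarrow> b \<noteq> c \<Longrightarrow> \<not> collinear {a, b, c}"
    using assms(10) unfolding general_position_def by blast
  ultimately show False using gp[of p1 p2 q] assms(2,3,4,5) by auto
qed


lemma open_side: "open {w. side a b w * k < 0}"
  using side_cont[of a b] by (intro open_Collect_less) (auto intro!: continuous_intros)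

lemma convex_side: "convex {w. side a b w * k \<ge> 0}"
  unfolding convex_def
proof (intro ballI allI impI, unfold mem_Collect_eq)
  fix x y :: point and u v :: real
  assume x: "side a b x * k \<ge> 0" and y: "side a b y * k \<ge> 0" and uv: "0 \<le> u" "0 \<le> v" "u + v = 1"
  have "side a b (u *\<^sub>R x + v *\<^sub>R y) * k = u * (side a b x * k) + v * (side a b y * k)"
    using side_comb[OF uv(3)] by (simp add: algebra_simps)
  also have "\<dots> \<ge> 0" using x y uv by simp
  finally show "side a b (u *\<^sub>R x + v *\<^sub>R y) * k \<ge> 0" .
qed

lemma edge:
  fixes P Q :: "point set"
  assumes cP: "compact P" "convex P" and cQ: "compact Q" "convex Q"
    and D: "side a b c \<noteq> 0" and ab: "a \<noteq> b"
    and aP: "a \<in> P" "b \<in> P" "a \<in> Q" "b \<in> Q"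
    and e1: "{w. side a b w * side a b c < 0} \<inter> (P - Q) = {}"
    and e2: "{w. side a b w * side a b c < 0} \<inter> (Q - P) = {}"
    and disj: "vertices P \<inter> vertices Q = {}" and gp: "general_position (vertices P \<union> vertices Q)"
  shows False
proof -
  define U where "U = {w. side a b w * side a b c < 0}"
  define C where "C = {w. side a b w * side a b c \<ge> 0}"
  have oU: "open U" unfolding U_def by (rule open_side)
  have vC: "convex C" unfolding C_def by (rule convex_side)
  have PU: "P \<inter> U = Q \<inter> U" using e1 e2 unfolding U_def by blast
  have noP: "v \<in> C" if "v extreme_point_of P" for v
  proof (rule ccontr)
    assume "v \<notin> C"
    then have "v \<in> U" unfolding U_def C_def by auto
    then have "v extreme_point_of Q" using local_extreme[OF oU PU cQ(2)] that by blast
    then show False using disj that unfolding vertices_def by blast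
  qed
  have noQ: "v \<in> C" if "v extreme_point_of Q" for v
  proof (rule ccontr)
    assume "v \<notin> C"
    then have "v \<in> U" unfolding U_def C_def by auto
    then have "v extreme_point_of P" using local_extreme[OF oU PU[symmetric] cP(2)] that by blast
    then show False using disj that unfolding vertices_def by blast
  qed
  have "convex hull {x. x extreme_point_of P} \<subseteq> C" using noP vC by (intro hull_minimal) auto
  then have PC: "P \<subseteq> C" using Krein_Milman_Minkowski[OF cP] by simp
  have "convex hull {x. x extreme_point_of Q} \<subseteq> C" using noQ vC by (intro hull_minimal) auto
  then have QC: "Q \<subseteq> C" using Krein_Milman_Minkowski[OF cQ] by simp
  have "\<exists>p1 p2. p1 \<noteq> p2 \<and> p1 \<in> vertices P \<and> p2 \<in> vertices P \<and> side a b p1 = 0 \<and> side a b p2 = 0"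
    using PC unfolding C_def by (intro face_vertices[OF cP D ab aP(1,2)]) (auto simp: mult.commute)
  then obtain p1 p2 where p: "p1 \<noteq> p2" "p1 \<in> vertices P" "p2 \<in> vertices P" "side a b p1 = 0" "side a b p2 = 0"
    by blast
  have "\<exists>p1 p2. p1 \<noteq> p2 \<and> p1 \<in> vertices Q \<and> p2 \<in> vertices Q \<and> side a b p1 = 0 \<and> side a b p2 = 0"
    using QC unfolding C_def by (intro face_vertices[OF cQ D ab aP(3,4)]) (auto simp: mult.commute)
  then obtain q where q: "q \<in> vertices Q" "side a b q = 0" by blast
  show False using final[OF ab p(1,2,3) q(1) p(4,5) q(2) disj gp] .
qed

lemma halfplane:
  fixes P :: "point set"
  assumes "compact P" "convex P" "u \<noteq> v" "0 < t" "t < 1" "m = (1 - t) *\<^sub>R u + t *\<^sub>R v"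
    "u \<in> P" "v \<in> P" "m \<in> frontier P"
  shows "\<exists>s. s \<noteq> 0 \<and> (\<forall>w\<in>P. s * side u v w \<ge> 0)"
proof -
  obtain n where n: "n \<noteq> 0" "\<forall>p\<in>P. n \<bullet> p \<le> n \<bullet> m"
    using support[OF assms(2) compact_imp_closed[OF assms(1)] assms(9)] by blast
  have nm: "n \<bullet> m = (1 - t) * (n \<bullet> u) + t * (n \<bullet> v)" using assms(6) by (simp add: inner_add_right)
  have le: "n \<bullet> u \<le> n \<bullet> m" "n \<bullet> v \<le> n \<bullet> m" using n(2) assms(7,8) by auto
  have "(1 - t) * (n \<bullet> m - n \<bullet> u) + t * (n \<bullet> m - n \<bullet> v) = 0" using nm by (simp add: algebra_simps)
  moreover have "(1 - t) * (n \<bullet> m - n \<bullet> u) \<ge> 0" "t * (n \<bullet> m - n \<bullet> v) \<ge> 0" using le assms(4,5) by auto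
  ultimately have "(1 - t) * (n \<bullet> m - n \<bullet> u) = 0" "t * (n \<bullet> m - n \<bullet> v) = 0" by linarith+
  then have eq: "n \<bullet> u = n \<bullet> m" "n \<bullet> v = n \<bullet> m" using assms(4,5) by auto
  obtain l where l: "l \<noteq> 0" "\<And>p. n \<bullet> p - n \<bullet> u = l * side u v p"
    using normal_side[OF n(1) assms(3)] eq by auto
  show ?thesis
  proof (intro exI[of _ "-l"] conjI ballI)
    show "-l \<noteq> 0" using l by simp
    fix w assume "w \<in> P"
    then have "n \<bullet> w - n \<bullet> u \<le> 0" using n(2) eq by auto
    then show "- l * side u v w \<ge> 0" using l(2)[of w] by simp
  qed
qed

lemma colcase:
  fixes P Q :: "point set"
  assumes cP: "compact P" "convex P" and cQ: "compact Q" "convex Q"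
    and "u \<noteq> v" "0 < t" "t < 1" "m = (1 - t) *\<^sub>R u + t *\<^sub>R v"
    and "u \<in> P" "v \<in> P" "u \<in> Q" "v \<in> Q" "m \<in> frontier P" "m \<in> frontier Q"
    and disj: "vertices P \<inter> vertices Q = {}" and gp: "general_position (vertices P \<union> vertices Q)"
  shows False
proof -
  obtain s where s: "s \<noteq> 0" "\<forall>w\<in>P. s * side u v w \<ge> 0"
    using halfplane[OF cP assms(5-8) assms(9,10,13)] by blast
  obtain s' where s': "s' \<noteq> 0" "\<forall>w\<in>Q. s' * side u v w \<ge> 0"
    using halfplane[OF cQ assms(5-8) assms(11,12,14)] by blast
  have "\<exists>p1 p2. p1 \<noteq> p2 \<and> p1 \<in> vertices P \<and> p2 \<in> vertices P \<and> side u v p1 = 0 \<and> side u v p2 = 0"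
    using s(2) by (intro face_vertices[OF cP s(1) assms(5,9,10)]) auto
  then obtain p1 p2 where p: "p1 \<noteq> p2" "p1 \<in> vertices P" "p2 \<in> vertices P" "side u v p1 = 0" "side u v p2 = 0"
    by blast
  have "\<exists>p1 p2. p1 \<noteq> p2 \<and> p1 \<in> vertices Q \<and> p2 \<in> vertices Q \<and> side u v p1 = 0 \<and> side u v p2 = 0"
    using s'(2) by (intro face_vertices[OF cQ s'(1) assms(5,11,12)]) auto
  then obtain q where q: "q \<in> vertices Q" "side u v q = 0" by blast
  show False using final[OF assms(5) p(1,2,3) q(1) p(4,5) q(2) disj gp] .
qed

lemma split3:
  assumes "connected S" "open A" "open B" "open C" "A \<inter> B \<inter> S = {}" "B \<inter> C \<inter> S = {}"
    "C \<inter> A \<inter> S = {}" "S \<subseteq> A \<union> B \<union> C"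
  shows "(A \<inter> S = {} \<and> B \<inter> S = {}) \<or> (B \<inter> S = {} \<and> C \<inter> S = {}) \<or> (A \<inter> S = {} \<and> C \<inter> S = {})"
proof -
  have "A \<inter> (B \<union> C) \<inter> S = {}" using assms(5,7) by blast
  moreover have "S \<subseteq> A \<union> (B \<union> C)" using assms(8) by blast
  ultimately have "A \<inter> S = {} \<or> (B \<union> C) \<inter> S = {}"
    using connectedD[OF assms(1,2) open_Un[OF assms(3,4)]] by blast
  then show ?thesis
  proof
    assume A: "A \<inter> S = {}"
    then have "S \<subseteq> B \<union> C" using assms(8) by blast
    then have "B \<inter> S = {} \<or> C \<inter> S = {}" using connectedD[OF assms(1,3,4) assms(6)] by blast
    then show ?thesis using A by blast
  next
    assume "(B \<union> C) \<inter> S = {}"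
    then show ?thesis by blast
  qed
qed

lemma sep:
  fixes P Q :: "point set"
  assumes "convex P" "closed P" "convex Q" "x \<in> P" "y \<in> P" "z \<in> P" "x \<in> Q" "y \<in> Q" "z \<in> Q"
    "x \<in> frontier P" "y \<in> frontier P" "z \<in> frontier P" "\<not> collinear {x, y, z}" "connected (P - Q)"
  shows "({w. side x y w * side x y z < 0} \<inter> (P - Q) = {} \<and> {w. side y z w * side y z x < 0} \<inter> (P - Q) = {})
    \<or> ({w. side y z w * side y z x < 0} \<inter> (P - Q) = {} \<and> {w. side z x w * side z x y < 0} \<inter> (P - Q) = {})
    \<or> ({w. side x y w * side x y z < 0} \<inter> (P - Q) = {} \<and> {w. side z x w * side z x y < 0} \<inter> (P - Q) = {})"
proof (rule split3[OF assms(14) open_side open_side open_side])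
  have nc2: "\<not> collinear {y, z, x}" and nc3: "\<not> collinear {z, x, y}" using assms(13)
    by (simp_all add: insert_commute)
  have D: "side x y z \<noteq> 0" using noncol_D[OF assms(13)] by simp
  show "{w. side x y w * side x y z < 0} \<inter> {w. side y z w * side y z x < 0} \<inter> (P - Q) = {}"
    using corner[OF assms(1,2,4,6) _ assms(11,13)] by blast
  show "{w. side y z w * side y z x < 0} \<inter> {w. side z x w * side z x y < 0} \<inter> (P - Q) = {}"
    using corner[OF assms(1,2,5,4) _ assms(12) nc2] by blast
  show "{w. side z x w * side z x y < 0} \<inter> {w. side x y w * side x y z < 0} \<inter> (P - Q) = {}"
    using corner[OF assms(1,2,6,5) _ assms(10) nc3] by blast
  show "P - Q \<subseteq> {w. side x y w * side x y z < 0} \<union> {w. side y z w * side y z x < 0} \<union> {w. side z x w * side z x y < 0}"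
    using cover[OF assms(3,7,8,9) D] by blast
qed

lemma aux1: assumes "k * (1 - t) = (1::real)" shows "(1 - (-t*k)) * (a + t*(c - a)) + (-t*k) * c = a"
proof -
  have "(1 - (-t*k)) * (a + t*(c - a)) + (-t*k) * c - a = t*(c - a)*(1 - k*(1 - t))"
    by (simp add: algebra_simps)
  also have "\<dots> = 0" using assms by simp
  finally show ?thesis by simp
qed

lemma aux1v: assumes "k * (1 - t) = (1::real)"
  shows "x = (1 - (-t*k)) *\<^sub>R (x + t *\<^sub>R (z - x)) + (-t*k) *\<^sub>R (z::point)"
proof (rule eq2)
  show "x$1 = ((1 - (-t*k)) *\<^sub>R (x + t *\<^sub>R (z - x)) + (-t*k) *\<^sub>R z)$1"
    using aux1[OF assms, of "x$1" "z$1"] by simp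
  show "x$2 = ((1 - (-t*k)) *\<^sub>R (x + t *\<^sub>R (z - x)) + (-t*k) *\<^sub>R z)$2"
    using aux1[OF assms, of "x$2" "z$2"] by simp
qed

lemma aux2: assumes "(t::real) > 1" shows "(1 - 1/t) * a + (1/t) * (a + t*(c - a)) = c"
proof -
  have "(1/t) * (a + t*(c - a)) = a/t + (c - a)" using assms by (simp add: field_simps)
  then show ?thesis by (simp add: algebra_simps)
qed

lemma aux2v: assumes "(t::real) > 1"
  shows "(z::point) = (1 - 1/t) *\<^sub>R x + (1/t) *\<^sub>R (x + t *\<^sub>R (z - x))"
proof (rule eq2)
  show "z$1 = ((1 - 1/t) *\<^sub>R x + (1/t) *\<^sub>R (x + t *\<^sub>R (z - x)))$1"
    using aux2[OF assms, of "x$1" "z$1"] by simp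
  show "z$2 = ((1 - 1/t) *\<^sub>R x + (1/t) *\<^sub>R (x + t *\<^sub>R (z - x)))$2"
    using aux2[OF assms, of "x$2" "z$2"] by simp
qed

lemma no_three:
  fixes P Q :: "point set"
  assumes cP: "compact P" "convex P" and cQ: "compact Q" "convex Q"
    and cc: "connected (P - Q)" "connected (Q - P)"
    and disj: "vertices P \<inter> vertices Q = {}" and gp: "general_position (vertices P \<union> vertices Q)"
    and F: "x \<in> frontier P \<inter> frontier Q" "y \<in> frontier P \<inter> frontier Q" "z \<in> frontier P \<inter> frontier Q"
    and d: "x \<noteq> y" "x \<noteq> z" "y \<noteq> z"
  shows False
proof -
  have clP: "closed P" and clQ: "closed Q" using cP cQ compact_imp_closed by auto
  have inP: "x \<in> P" "y \<in> P" "z \<in> P" using F clP frontier_subset_closed by blast+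
  have inQ: "x \<in> Q" "y \<in> Q" "z \<in> Q" using F clQ frontier_subset_closed by blast+
  have fP: "x \<in> frontier P" "y \<in> frontier P" "z \<in> frontier P" using F by auto
  have fQ: "x \<in> frontier Q" "y \<in> frontier Q" "z \<in> frontier Q" using F by auto
  show False
  proof (cases "collinear {x, y, z}")
    case True
    then have "collinear {x, z, y}" by (simp add: insert_commute)
    then have "side x z y = 0" by (rule collinear_side)
    then obtain t where t: "y = x + t *\<^sub>R (z - x)" using side_line[OF d(2)] by blast
    consider "t < 0" | "t = 0" | "0 < t \<and> t < 1" | "t = 1" | "t > 1" by linarith
    then show False
    proof cases
      case 1
      define k where "k = 1 / (1 - t)"
      have k: "k > 0" "k * (1 - t) = 1" using 1 unfolding k_def by auto
      define t' where "t' = - t * k"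
      have "t' = 1 - k" unfolding t'_def using k(2) by (simp add: algebra_simps)
      moreover have "t * k < 0" using 1 k(1) by (rule mult_neg_pos)
      ultimately have t': "0 < t'" "t' < 1" using k(1) unfolding t'_def by linarith+
      have "x = (1 - t') *\<^sub>R y + t' *\<^sub>R z"
        unfolding t t'_def by (rule aux1v[OF k(2)])
      then show False
        using colcase[OF cP cQ d(3) t' _ inP(2,3) inQ(2,3) fP(1) fQ(1) disj gp] by blast
    next
      case 2 then show False using t d by simp
    next
      case 3
      have "y = (1 - t) *\<^sub>R x + t *\<^sub>R z" unfolding t by (simp add: algebra_simps)
      then show False
        using colcase[OF cP cQ d(2) conjunct1[OF 3] conjunct2[OF 3] _ inP(1,3) inQ(1,3) fP(2) fQ(2) disj gp]
        by blast
    next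
      case 4 then show False using t d by simp
    next
      case 5
      have t': "0 < 1 / t" "1 / t < 1" using 5 by auto
      have "z = (1 - 1 / t) *\<^sub>R x + (1 / t) *\<^sub>R y"
        unfolding t by (rule aux2v[OF 5])
      then show False
        using colcase[OF cP cQ d(1) t' _ inP(1,2) inQ(1,2) fP(3) fQ(3) disj gp] by blast
    qed
  next
    case False
    have D: "side x y z \<noteq> 0" using noncol_D[OF False] by simp
    have D2: "side y z x \<noteq> 0" using D side_cyc[of y z x] by simp
    have D3: "side z x y \<noteq> 0" using D side_cyc[of z x y] side_cyc[of y z x] by simp
    have nc': "\<not> collinear {x, y, z}" using False .
    note s1 = sep[OF cP(2) clP cQ(2) inP inQ fP False cc(1)]
    have "\<not> collinear {x, y, z}" using False .
    note s2 = sep[OF cQ(2) clQ cP(2) inQ inP fQ False cc(2)]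
    have c: "({w. side x y w * side x y z < 0} \<inter> (P - Q) = {} \<and> {w. side x y w * side x y z < 0} \<inter> (Q - P) = {})
      \<or> ({w. side y z w * side y z x < 0} \<inter> (P - Q) = {} \<and> {w. side y z w * side y z x < 0} \<inter> (Q - P) = {})
      \<or> ({w. side z x w * side z x y < 0} \<inter> (P - Q) = {} \<and> {w. side z x w * side z x y < 0} \<inter> (Q - P) = {})"
      using s1 s2 by blast
    then show False
    proof (elim disjE conjE)
      assume "{w. side x y w * side x y z < 0} \<inter> (P - Q) = {}" "{w. side x y w * side x y z < 0} \<inter> (Q - P) = {}"
      then show False using edge[OF cP cQ D d(1) inP(1,2) inQ(1,2) _ _ disj gp] by blast
    next
      assume "{w. side y z w * side y z x < 0} \<inter> (P - Q) = {}" "{w. side y z w * side y z x < 0} \<inter> (Q - P) = {}"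
      then show False using edge[OF cP cQ D2 d(3) inP(2,3) inQ(2,3) _ _ disj gp] by blast
    next
      assume "{w. side z x w * side z x y < 0} \<inter> (P - Q) = {}" "{w. side z x w * side z x y < 0} \<inter> (Q - P) = {}"
      then show False using edge[OF cP cQ D3 _ inP(3,1) inQ(3,1) _ _ disj gp] d(2) by blast
    qed
  qed
qed

theorem lemma2:
  fixes P Q :: "point set"
  assumes "convex_polygon P" and "convex_polygon Q"
    and "general_position (vertices P \<union> vertices Q)"
    and "weakly_disjoint P Q"
  shows "finite (frontier P \<inter> frontier Q) \<and> card (frontier P \<inter> frontier Q) \<le> 2"
proof -
  obtain SP where SP: "finite SP" "P = convex hull SP" using assms(1) unfolding convex_polygon_def by blast
  obtain SQ where SQ: "finite SQ" "Q = convex hull SQ" using assms(2) unfolding convex_polygon_def by blast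
  have cP: "compact P" "convex P" using SP by (simp_all add: compact_convex_hull finite_imp_compact)
  have cQ: "compact Q" "convex Q" using SQ by (simp_all add: compact_convex_hull finite_imp_compact)
  have cc: "connected (P - Q)" "connected (Q - P)" and disj: "vertices P \<inter> vertices Q = {}"
    using assms(4) unfolding weakly_disjoint_def by auto
  let ?F = "frontier P \<inter> frontier Q"
  have no3: False if G: "G \<subseteq> ?F" "card G = 3" for G
  proof -
    obtain x y z where "G = {x, y, z}" "x \<noteq> y" "y \<noteq> z" "x \<noteq> z" using G(2) card_3_iff by metis
    then show False using no_three[OF cP cQ cc disj assms(3), of x y z] G(1) by auto
  qed
  show ?thesis
  proof (rule ccontr)
    assume neg: "\<not> (finite ?F \<and> card ?F \<le> 2)"
    have "\<exists>G. G \<subseteq> ?F \<and> card G = 3"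
    proof (cases "finite ?F")
      case True
      then have "3 \<le> card ?F" using neg by auto
      then obtain G where "G \<subseteq> ?F" "card G = 3" by (rule obtain_subset_with_card_n)
      then show ?thesis by blast
    next
      case False
      then show ?thesis using infinite_arbitrarily_large[OF False, of 3] by blast
    qed
    then show False using no3 by blast
  qed
qed

end
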